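(* Let $\alpha:A^{\Delta}\to(H,V)$ be a homomorphism onto a finite forest algebra with $H$ idempotent and commutative, and let $\Gamma\subseteq H$ be a reachability class. Define subsets $B_0,B_1,\ldots$ of $\Gamma\times\Gamma$ by: $B_0=\{(h,h')\in\Gamma\times\Gamma:h\neq h'\}$, and for $j\ge 0$, $B_{j+1}$ is the smallest set that contains $\{(\alpha(a)h,\alpha(a)h'):a\in A,\ (h,h')\in B_j,\ (\alpha(a)h,\alpha(a)h')\in B_0\}$ and is closed under the rules: (i) if $(h,h')\in B_{j+1}$, $g\in H$ and $(h+g,h'+g)\in B_0$ then $(h+g,h'+g)\in B_{j+1}$; (ii) if $(h,h'),(g,g')\in B_{j+1}$ and $(h+g,h'+g')\in B_0$ then $(h+g,h'+g')\in B_{j+1}$. Then for all $h,h'\in\Gamma$ with $h\ne h'$ and all $k\ge0$: $(h,h')\in B_k$ if and only if there exist forests $s,t\in H_A$ with $(s)^{\alpha_\Gamma}\sim_k(t)^{\alpha_\Gamma}$, $\alpha(s)=h$ and $\alpha(t)=h'$. Moreover $B_{k+1}\subseteq B_k$ for all $k\ge0$.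
   Context: $A^{\Delta}=(H_A,V_A)$: free forest algebra over finite alphabet $A$; $H_A$ forests (finite ordered sequences of finite ordered $A$-labelled trees) under concatenation; $V_A$ contexts (forests with one hole) acting by substitution; $as$ is the tree with root $a$ and child forest $s$. A forest algebra $(H,V)$ is an additive monoid $H$ with a monoid $V$ acting faithfully on the left, containing the maps $g\mapsto g+h$, $g\mapsto h+g$. For $a\in A$, $\alpha(a)$ is the image of the context $a\square$. Reachability: $h\le h'$ iff $h=vh'$ for some $v\in V$; a reachability class is a class of the relation ($h\le h'$ and $h'\le h$); $h>\Gamma$ means the class of $h$ is strictly above $\Gamma$. $\alpha_\Gamma:A^{\Delta}\to(H_\Gamma,V_\Gamma)$ is the quotient homomorphism identifying all elements of $\{h:h\not>\Gamma\}$ to a single absorbing element $\infty$ (forests identified iff equal values outside this set or both values in it). For a forest $s$, $s^{\alpha_\Gamma}$ is the forest over $A\times H_\Gamma$ obtained by relabeling each node whose subtree is $at$ with $(a,\alpha_\Gamma(t))$. For an alphabet $B$, $\sim_0$ identifies all forests over $B$, and for $s=b_1s_1+\cdots+b_rs_r$, $s\sim_{k+1}s'$ iff $\{(b_i,[s_i]_{\sim_k}):1\le i\le r\}$ equals the corresponding set for $s'$. *)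

theory Defs
  imports Main
begin

datatype 'a tree = Node (root: 'a) (children: "'a tree list")

type_synonym 'a forest = "'a tree list"

text \<open>A homomorphism from the free forest algebra over 'a into a forest algebra (H,V)
  (with V acting faithfully, hence a monoid of functions on H) is determined by the
  images f a of the contexts a\<box>.\<close>

fun evalT :: "('a \<Rightarrow> 'h::monoid_add \<Rightarrow> 'h) \<Rightarrow> 'a tree \<Rightarrow> 'h" where
  "evalT f (Node a ts) = f a (sum_list (map (evalT f) ts))"

definition evalF :: "('a \<Rightarrow> 'h::monoid_add \<Rightarrow> 'h) \<Rightarrow> 'a forest \<Rightarrow> 'h" where
  "evalF f s = sum_list (map (evalT f) s)"

text \<open>V: the image of the context monoid, i.e. the monoid of functions on H generated by
  the maps f a and the translations h \<mapsto> h+g, h \<mapsto> g+h.\<close>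

inductive_set Vmon :: "('a \<Rightarrow> 'h::monoid_add \<Rightarrow> 'h) \<Rightarrow> ('h \<Rightarrow> 'h) set" for f where
  V_id: "id \<in> Vmon f"
| V_letter: "f a \<in> Vmon f"
| V_addr: "(\<lambda>h. h + g) \<in> Vmon f"
| V_addl: "(\<lambda>h. g + h) \<in> Vmon f"
| V_comp: "v \<in> Vmon f \<Longrightarrow> w \<in> Vmon f \<Longrightarrow> v \<circ> w \<in> Vmon f"

definition reach :: "('a \<Rightarrow> 'h::monoid_add \<Rightarrow> 'h) \<Rightarrow> 'h \<Rightarrow> 'h \<Rightarrow> bool" where
  "reach f h h' \<longleftrightarrow> (\<exists>v \<in> Vmon f. h = v h')"

definition reach_class :: "('a \<Rightarrow> 'h::monoid_add \<Rightarrow> 'h) \<Rightarrow> 'h set \<Rightarrow> bool" where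
  "reach_class f \<Gamma> \<longleftrightarrow> (\<exists>h0. \<Gamma> = {h. reach f h h0 \<and> reach f h0 h})"

definition above :: "('a \<Rightarrow> 'h::monoid_add \<Rightarrow> 'h) \<Rightarrow> 'h set \<Rightarrow> 'h \<Rightarrow> bool" where
  "above f \<Gamma> h \<longleftrightarrow> (\<exists>g\<in>\<Gamma>. reach f g h \<and> \<not> reach f h g)"

text \<open>\<alpha>_\<Gamma> on forests: H_\<Gamma> is represented by 'h option, None being the absorbing \<infinity>.\<close>
definition alphaG :: "('a \<Rightarrow> 'h::monoid_add \<Rightarrow> 'h) \<Rightarrow> 'h set \<Rightarrow> 'a forest \<Rightarrow> 'h option" where
  "alphaG f \<Gamma> s = (if above f \<Gamma> (evalF f s) then Some (evalF f s) else None)"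

fun relabelT :: "('a forest \<Rightarrow> 'c) \<Rightarrow> 'a tree \<Rightarrow> ('a \<times> 'c) tree" where
  "relabelT g (Node a ts) = Node (a, g ts) (map (relabelT g) ts)"

definition relabelF :: "('a forest \<Rightarrow> 'c) \<Rightarrow> 'a forest \<Rightarrow> ('a \<times> 'c) forest" where
  "relabelF g s = map (relabelT g) s"

primrec simk :: "nat \<Rightarrow> 'b forest \<Rightarrow> 'b forest \<Rightarrow> bool" where
  "simk 0 s t = True"
| "simk (Suc k) s t =
     ((\<lambda>x. (root x, {u. simk k (children x) u})) ` set s =
      (\<lambda>x. (root x, {u. simk k (children x) u})) ` set t)"

definition B0 :: "'h set \<Rightarrow> ('h \<times> 'h) set" where
  "B0 \<Gamma> = {(h, h'). h \<in> \<Gamma> \<and> h' \<in> \<Gamma> \<and> h \<noteq> h'}"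

inductive_set Bstep :: "('a \<Rightarrow> 'h::monoid_add \<Rightarrow> 'h) \<Rightarrow> 'h set \<Rightarrow> ('h \<times> 'h) set \<Rightarrow> ('h \<times> 'h) set"
  for f \<Gamma> P where
  B_base: "(h, h') \<in> P \<Longrightarrow> (f a h, f a h') \<in> B0 \<Gamma> \<Longrightarrow> (f a h, f a h') \<in> Bstep f \<Gamma> P"
| B_rule1: "(h, h') \<in> Bstep f \<Gamma> P \<Longrightarrow> (h + g, h' + g) \<in> B0 \<Gamma> \<Longrightarrow> (h + g, h' + g) \<in> Bstep f \<Gamma> P"
| B_rule2: "(h, h') \<in> Bstep f \<Gamma> P \<Longrightarrow> (g, g') \<in> Bstep f \<Gamma> P \<Longrightarrow> (h + g, h' + g') \<in> B0 \<Gamma>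
            \<Longrightarrow> (h + g, h' + g') \<in> Bstep f \<Gamma> P"

primrec Bset :: "('a \<Rightarrow> 'h::monoid_add \<Rightarrow> 'h) \<Rightarrow> 'h set \<Rightarrow> nat \<Rightarrow> ('h \<times> 'h) set" where
  "Bset f \<Gamma> 0 = B0 \<Gamma>"
| "Bset f \<Gamma> (Suc j) = Bstep f \<Gamma> (Bset f \<Gamma> j)"

end

theory Submission
  imports Defs
begin

lemma reach_refl: "reach f h h"
  unfolding reach_def by (rule bexI[of _ id]) (auto intro: Vmon.intros)

lemma reach_trans: "reach f a b \<Longrightarrow> reach f b c \<Longrightarrow> reach f a c"
  unfolding reach_def
proof -
  assume "\<exists>v\<in>Vmon f. a = v b" "\<exists>v\<in>Vmon f. b = v c"
  then obtain v w where "v \<in> Vmon f" "w \<in> Vmon f" "a = v b" "b = w c" by blast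
  then show "\<exists>v\<in>Vmon f. a = v c" by (intro bexI[of _ "v \<circ> w"]) (auto intro: Vmon.intros)
qed

lemma reach_addR: "reach f (x + y) x"
  unfolding reach_def by (rule bexI[of _ "\<lambda>h. h + y"]) (auto intro: Vmon.intros)

lemma reach_addL: "reach f (x + y) y"
  unfolding reach_def by (rule bexI[of _ "\<lambda>h. x + h"]) (auto intro: Vmon.intros)

lemma reach_letter: "reach f (f a x) x"
  unfolding reach_def by (rule bexI[of _ "f a"]) (auto intro: Vmon.intros)

lemma reach_sum: "x \<in> set xs \<Longrightarrow> reach f (sum_list xs) (x::'h::monoid_add)"
proof (induction xs)
  case Nil then show ?case by simp
next
  case (Cons a xs)
  show ?case
  proof (cases "x = a")
    case True then show ?thesis by (simp add: reach_addR)
  next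
    case False
    then have "reach f (sum_list xs) x" using Cons by simp
    then show ?thesis using reach_addL reach_trans by fastforce
  qed
qed

lemma sandwich:
  assumes G: "\<Gamma> = {h. reach f h h0 \<and> reach f h0 h}"
    and "a \<in> \<Gamma>" "c \<in> \<Gamma>" "reach f a b" "reach f b c"
  shows "b \<in> \<Gamma>"
  using assms reach_trans by (smt (verit, best) mem_Collect_eq)

lemma not_above_in:
  assumes G: "\<Gamma> = {h. reach f h h0 \<and> reach f h0 h}"
    and "h \<in> \<Gamma>" "reach f h x" "\<not> above f \<Gamma> x"
  shows "x \<in> \<Gamma>"
proof -
  have "reach f x h" using assms unfolding above_def by blast
  then show ?thesis by (rule sandwich[OF G assms(2) assms(2) assms(3)])
qed

lemma in_not_above:
  assumes G: "\<Gamma> = {h. reach f h h0 \<and> reach f h0 h}"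
    and "h \<in> \<Gamma>"
  shows "\<not> above f \<Gamma> h"
  using assms reach_trans unfolding above_def by blast

lemma sum_list_set_eq:
  assumes idem: "\<forall>h::'h::comm_monoid_add. h + h = h"
  shows "sum_list (xs::'h list) = sum id (set xs)"
proof (induction xs)
  case Nil then show ?case by simp
next
  case (Cons a xs)
  show ?case
  proof (cases "a \<in> set xs")
    case True
    have "sum id (set xs) = a + sum id (set xs - {a})"
      using True by (simp add: sum.remove)
    then have "a + sum id (set xs) = sum id (set xs)"
      using idem by (metis add.assoc)
    then show ?thesis using Cons True by (simp add: insert_absorb)
  next
    case False then show ?thesis using Cons by simp
  qed
qed

lemma sum_list_set:
  assumes idem: "\<forall>h::'h::comm_monoid_add. h + h = h"
    and "set xs = set ys"
  shows "sum_list (xs::'h list) = sum_list ys"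
  using sum_list_set_eq[OF idem] assms(2) by metis

lemma Bstep_B0': "(x,y) \<in> Bstep f \<Gamma> P \<Longrightarrow> (x,y) \<in> B0 \<Gamma>"
  by (induction rule: Bstep.induct) auto

lemma Bstep_B0: "p \<in> Bstep f \<Gamma> P \<Longrightarrow> p \<in> B0 \<Gamma>"
  using Bstep_B0' by (cases p) blast

lemma Bset_B0: "Bset f \<Gamma> k \<subseteq> B0 \<Gamma>"
  by (cases k) (auto dest: Bstep_B0)

lemma pair_list:
  fixes f :: "'a \<Rightarrow> 'h::comm_monoid_add \<Rightarrow> 'h"
  assumes G: "\<Gamma> = {h. reach f h h0 \<and> reach f h0 h}"
    and L: "\<forall>(p,q)\<in>set L. p = q \<or> (p,q) \<in> Bstep f \<Gamma> P"
  shows "\<forall>g. (sum_list (map fst L) + g, sum_list (map snd L) + g) \<in> B0 \<Gamma>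
           \<longrightarrow> (sum_list (map fst L) + g, sum_list (map snd L) + g) \<in> Bstep f \<Gamma> P"
  using L
proof (induction L)
  case Nil then show ?case by (simp add: B0_def)
next
  case (Cons pq L')
  obtain p q where pq: "pq = (p,q)" by fastforce
  have IH: "\<forall>g. (sum_list (map fst L') + g, sum_list (map snd L') + g) \<in> B0 \<Gamma>
           \<longrightarrow> (sum_list (map fst L') + g, sum_list (map snd L') + g) \<in> Bstep f \<Gamma> P"
    using Cons by auto
  show ?case
  proof (intro allI impI)
    fix g
    define S where "S = sum_list (map fst L') + g"
    define S' where "S' = sum_list (map snd L') + g"
    have e1: "sum_list (map fst (pq # L')) + g = p + S" by (simp add: pq S_def add.assoc)
    have e2: "sum_list (map snd (pq # L')) + g = q + S'" by (simp add: pq S'_def add.assoc)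
    assume B: "(sum_list (map fst (pq # L')) + g, sum_list (map snd (pq # L')) + g) \<in> B0 \<Gamma>"
    then have B': "(p + S, q + S') \<in> B0 \<Gamma>" using e1 e2 by simp
    have "p = q \<or> (p,q) \<in> Bstep f \<Gamma> P" using Cons.prems pq by auto
    then have "(p + S, q + S') \<in> Bstep f \<Gamma> P"
    proof
      assume "p = q"
      have a1: "p + S = sum_list (map fst L') + (p + g)" by (simp add: S_def add_ac)
      have a2: "q + S' = sum_list (map snd L') + (p + g)" using \<open>p = q\<close> by (simp add: S'_def add_ac)
      show ?thesis using IH B' a1 a2 by metis
    next
      assume pqB: "(p,q) \<in> Bstep f \<Gamma> P"
      show ?thesis
      proof (cases "S = S'")
        case True then show ?thesis using B_rule1[OF pqB, of S] B' by simp
      next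
        case False
        have "\<exists>(p2,q2)\<in>set L'. (p2,q2) \<in> Bstep f \<Gamma> P"
        proof (rule ccontr)
          assume "\<not> ?thesis"
          then have "\<forall>(p2,q2)\<in>set L'. p2 = q2" using Cons.prems by auto
          then have "map fst L' = map snd L'"
            by (induction L') auto
          then have "sum_list (map fst L') = sum_list (map snd L')" by (rule arg_cong[where f=sum_list])
          then have "S = S'" unfolding S_def S'_def by (rule arg_cong[where f="\<lambda>x. x + g"])
          then show False using False by contradiction
        qed
        then obtain p2 q2 where p2: "(p2,q2) \<in> set L'" "(p2,q2) \<in> Bstep f \<Gamma> P" by blast
        then have p2G: "p2 \<in> \<Gamma>" "q2 \<in> \<Gamma>" using Bstep_B0 unfolding B0_def by blast+
        have hG: "p + S \<in> \<Gamma>" "q + S' \<in> \<Gamma>" using B' unfolding B0_def by auto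
        have "reach f S p2"
          unfolding S_def using reach_sum[of p2 "map fst L'" f] p2(1) reach_addR reach_trans
          by (metis fst_conv image_eqI list.set_map)
        then have SG: "S \<in> \<Gamma>" using sandwich[OF G hG(1) p2G(1)] reach_addL by blast
        have "reach f S' q2"
          unfolding S'_def using reach_sum[of q2 "map snd L'" f] p2(1) reach_addR reach_trans
          by (metis snd_conv image_eqI list.set_map)
        then have S'G: "S' \<in> \<Gamma>" using sandwich[OF G hG(2) p2G(2)] reach_addL by blast
        have "(S, S') \<in> B0 \<Gamma>" using SG S'G False unfolding B0_def by auto
        then have "(S, S') \<in> Bstep f \<Gamma> P" using IH S_def S'_def by auto
        then show ?thesis using B_rule2[OF pqB] B' by blast
      qed
    qed
    then show "(sum_list (map fst (pq # L')) + g, sum_list (map snd (pq # L')) + g) \<in> Bstep f \<Gamma> P"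
      using e1 e2 by simp
  qed
qed

lemma simk_refl: "simk k s s"
  by (cases k) auto

lemma simk_class: "simk k x y \<Longrightarrow> simk k x u = simk k y u"
  by (cases k) auto

lemma simk_class_eq: "simk k x y \<Longrightarrow> {u. simk k x u} = {u. simk k y u}"
  using simk_class by blast

lemma simk_from_class: "{u. simk k x u} = {u. simk k y u} \<Longrightarrow> simk k x y"
  using simk_refl[of k y] by blast

lemma simk_mono: "simk (Suc k) (s::'b forest) t \<Longrightarrow> simk k s t"
proof (induction k arbitrary: s t)
  case 0 then show ?case by simp
next
  case (Suc k)
  let ?F = "\<lambda>x::'b tree. (root x, {u. simk (Suc k) (children x) u})"
  let ?G = "\<lambda>x::'b tree. (root x, {u. simk k (children x) u})"
  have E: "?F ` set s = ?F ` set t" using Suc.prems by simp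
  have *: "?G ` set a \<subseteq> ?G ` set b" if "?F ` set a = ?F ` set b" for a b :: "'b forest"
  proof
    fix z assume "z \<in> ?G ` set a"
    then obtain x where x: "x \<in> set a" "z = ?G x" by blast
    then have "?F x \<in> ?F ` set b" using that by blast
    then obtain y where y: "y \<in> set b" "?F x = ?F y" by auto
    then have "root x = root y" "{u. simk (Suc k) (children x) u} = {u. simk (Suc k) (children y) u}"
      by (simp_all del: simk.simps)
    then have r: "root x = root y" and c: "simk (Suc k) (children x) (children y)"
      by (auto intro: simk_from_class simp del: simk.simps)
    from c have "simk k (children x) (children y)" by (rule Suc.IH)
    then have "{u. simk k (children x) u} = {u. simk k (children y) u}" by (rule simk_class_eq)
    then have "?G x = ?G y" using r by (simp del: simk.simps)
    then show "z \<in> ?G ` set b" using x y by auto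
  qed
  show ?case using *[OF E] *[OF E[symmetric]] by simp
qed

lemma relabelF_append: "relabelF g (s @ u) = relabelF g s @ relabelF g u"
  unfolding relabelF_def by simp

lemma evalF_append: "evalF f (s @ u) = evalF f s + evalF f u"
  unfolding evalF_def by simp

lemma simk_append: "simk k s t \<Longrightarrow> simk k u v \<Longrightarrow> simk k (s @ u) (t @ v)"
  by (cases k) (auto simp: image_Un)

lemma evalT_Node: "evalT f (Node a ts) = f a (evalF f ts)"
  unfolding evalF_def by simp

lemma relabelT_Node: "relabelT g (Node a ts) = Node (a, g ts) (relabelF g ts)"
  unfolding relabelF_def by simp

lemma only_if:
  fixes f :: "'a \<Rightarrow> 'h::comm_monoid_add \<Rightarrow> 'h"
  assumes G: "\<Gamma> = {h. reach f h h0 \<and> reach f h0 h}"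
    and onto: "\<forall>h. \<exists>s. evalF f s = h"
    and PB: "P \<subseteq> B0 \<Gamma>"
    and W: "\<forall>(a,b)\<in>P. \<exists>ss tt. simk k (relabelF (alphaG f \<Gamma>) ss) (relabelF (alphaG f \<Gamma>) tt)
               \<and> evalF f ss = a \<and> evalF f tt = b"
    and xy: "(x,y) \<in> Bstep f \<Gamma> P"
  shows "\<exists>s t. simk (Suc k) (relabelF (alphaG f \<Gamma>) s) (relabelF (alphaG f \<Gamma>) t)
               \<and> evalF f s = x \<and> evalF f t = y"
  using xy
proof (induction rule: Bstep.induct)
  case (B_base h h' a)
  obtain ss tt where w: "simk k (relabelF (alphaG f \<Gamma>) ss) (relabelF (alphaG f \<Gamma>) tt)"
    "evalF f ss = h" "evalF f tt = h'" using bspec[OF W B_base(1)] by auto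
  have hG: "h \<in> \<Gamma>" "h' \<in> \<Gamma>" using PB B_base(1) unfolding B0_def by auto
  have n: "alphaG f \<Gamma> ss = None" "alphaG f \<Gamma> tt = None"
    using in_not_above[OF G] hG w unfolding alphaG_def by auto
  have r1: "relabelF (alphaG f \<Gamma>) [Node a ss] = [Node (a, None) (relabelF (alphaG f \<Gamma>) ss)]"
    using n unfolding relabelF_def by simp
  have r2: "relabelF (alphaG f \<Gamma>) [Node a tt] = [Node (a, None) (relabelF (alphaG f \<Gamma>) tt)]"
    using n unfolding relabelF_def by simp
  have "simk (Suc k) (relabelF (alphaG f \<Gamma>) [Node a ss]) (relabelF (alphaG f \<Gamma>) [Node a tt])"
    unfolding r1 r2 using simk_class_eq[OF w(1)] by simp
  moreover have "evalF f [Node a ss] = f a h" "evalF f [Node a tt] = f a h'"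
    using w unfolding evalF_def by simp_all
  ultimately show ?case by blast
next
  case (B_rule1 h h' g)
  obtain s t where st: "simk (Suc k) (relabelF (alphaG f \<Gamma>) s) (relabelF (alphaG f \<Gamma>) t)"
    "evalF f s = h" "evalF f t = h'" using B_rule1 by blast
  obtain u where u: "evalF f u = g" using onto by blast
  have "simk (Suc k) (relabelF (alphaG f \<Gamma>) (s @ u)) (relabelF (alphaG f \<Gamma>) (t @ u))"
    unfolding relabelF_append using simk_append[OF st(1) simk_refl] .
  moreover have "evalF f (s @ u) = h + g" "evalF f (t @ u) = h' + g"
    using st u by (simp_all add: evalF_append)
  ultimately show ?case by blast
next
  case (B_rule2 h h' g g')
  obtain s t where st: "simk (Suc k) (relabelF (alphaG f \<Gamma>) s) (relabelF (alphaG f \<Gamma>) t)"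
    "evalF f s = h" "evalF f t = h'" using B_rule2 by blast
  obtain u v where uv: "simk (Suc k) (relabelF (alphaG f \<Gamma>) u) (relabelF (alphaG f \<Gamma>) v)"
    "evalF f u = g" "evalF f v = g'" using B_rule2 by blast
  have "simk (Suc k) (relabelF (alphaG f \<Gamma>) (s @ u)) (relabelF (alphaG f \<Gamma>) (t @ v))"
    unfolding relabelF_append using simk_append[OF st(1) uv(1)] .
  moreover have "evalF f (s @ u) = h + g" "evalF f (t @ v) = h' + g'"
    using st uv by (simp_all add: evalF_append)
  ultimately show ?case by blast
qed

lemma simk_sym: "simk k x y \<Longrightarrow> simk k y x"
  using simk_class[of k x y x] simk_refl[of k x] by simp

lemma match:
  assumes S: "simk (Suc k) (relabelF g s) (relabelF g t)" and x: "x \<in> set s"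
  shows "\<exists>y\<in>set t. \<exists>a ss tt. x = Node a ss \<and> y = Node a tt \<and> g ss = g tt
            \<and> simk k (relabelF g ss) (relabelF g tt)"
proof -
  let ?F = "\<lambda>x. (root x, {u. simk k (children x) u})"
  obtain a ss where xa: "x = Node a ss" by (cases x)
  have E: "?F ` set (relabelF g s) = ?F ` set (relabelF g t)" using S by simp
  have "relabelT g x \<in> set (relabelF g s)" using x unfolding relabelF_def by simp
  then have "?F (relabelT g x) \<in> ?F ` set (relabelF g t)" using E by blast
  then obtain y' where y': "y' \<in> set (relabelF g t)" "?F (relabelT g x) = ?F y'" by blast
  then obtain y where y: "y \<in> set t" "y' = relabelT g y" unfolding relabelF_def by auto
  obtain b tt where yb: "y = Node b tt" by (cases y)
  have "?F (relabelT g x) = ((a, g ss), {u. simk k (relabelF g ss) u})"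
    unfolding xa relabelT_Node by simp
  moreover have "?F y' = ((b, g tt), {u. simk k (relabelF g tt) u})"
    unfolding y(2) yb relabelT_Node by simp
  ultimately have "a = b" "g ss = g tt" "{u. simk k (relabelF g ss) u} = {u. simk k (relabelF g tt) u}"
    using y'(2) by (simp_all del: simk.simps)
  then show ?thesis using y(1) xa yb simk_from_class by blast
qed

lemma good_pair:
  fixes f :: "'a \<Rightarrow> 'h::comm_monoid_add \<Rightarrow> 'h"
  assumes G: "\<Gamma> = {h. reach f h h0 \<and> reach f h0 h}"
    and hs: "evalF f s \<in> \<Gamma>" and xs: "x \<in> set s"
    and ht: "evalF f t \<in> \<Gamma>" and yt: "y \<in> set t"
    and M: "x = Node a ss" "y = Node a tt" "alphaG f \<Gamma> ss = alphaG f \<Gamma> tt"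
           "simk k (relabelF (alphaG f \<Gamma>) ss) (relabelF (alphaG f \<Gamma>) tt)"
    and IH: "\<forall>h h'. h \<in> \<Gamma> \<longrightarrow> h' \<in> \<Gamma> \<longrightarrow> h \<noteq> h' \<longrightarrow>
               (\<exists>ss tt. simk k (relabelF (alphaG f \<Gamma>) ss) (relabelF (alphaG f \<Gamma>) tt)
                   \<and> evalF f ss = h \<and> evalF f tt = h') \<longrightarrow> (h, h') \<in> Bset f \<Gamma> k"
  shows "evalT f x = evalT f y \<or> (evalT f x, evalT f y) \<in> Bstep f \<Gamma> (Bset f \<Gamma> k)"
proof (cases "alphaG f \<Gamma> ss")
  case (Some c)
  then have "evalF f ss = c" "evalF f tt = c" using M(3) unfolding alphaG_def
    by (auto split: if_splits)
  then show ?thesis unfolding M(1,2) evalT_Node by simp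
next
  case None
  then have na: "\<not> above f \<Gamma> (evalF f ss)" "\<not> above f \<Gamma> (evalF f tt)"
    using M(3) unfolding alphaG_def by (auto split: if_splits)
  have rx: "reach f (evalF f s) (evalT f x)"
    unfolding evalF_def using xs by (intro reach_sum) simp
  have ry: "reach f (evalF f t) (evalT f y)"
    unfolding evalF_def using yt by (intro reach_sum) simp
  have lx: "reach f (evalT f x) (evalF f ss)" unfolding M(1) evalT_Node by (rule reach_letter)
  have ly: "reach f (evalT f y) (evalF f tt)" unfolding M(2) evalT_Node by (rule reach_letter)
  have ssG: "evalF f ss \<in> \<Gamma>" using not_above_in[OF G hs reach_trans[OF rx lx] na(1)] .
  have ttG: "evalF f tt \<in> \<Gamma>" using not_above_in[OF G ht reach_trans[OF ry ly] na(2)] .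
  have xG: "evalT f x \<in> \<Gamma>" using sandwich[OF G hs ssG rx lx] .
  have yG: "evalT f y \<in> \<Gamma>" using sandwich[OF G ht ttG ry ly] .
  show ?thesis
  proof (cases "evalF f ss = evalF f tt")
    case True then show ?thesis unfolding M(1,2) evalT_Node by simp
  next
    case False
    then have inB: "(evalF f ss, evalF f tt) \<in> Bset f \<Gamma> k" using IH ssG ttG M(4) by blast
    show ?thesis
    proof (cases "evalT f x = evalT f y")
      case False
      then have "(f a (evalF f ss), f a (evalF f tt)) \<in> B0 \<Gamma>"
        using xG yG unfolding B0_def M(1,2) evalT_Node by simp
      then have "(f a (evalF f ss), f a (evalF f tt)) \<in> Bstep f \<Gamma> (Bset f \<Gamma> k)"
        by (rule B_base[OF inB])
      then show ?thesis unfolding M(1,2) evalT_Node by simp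
    qed simp
  qed
qed

lemma if_dir:
  fixes f :: "'a \<Rightarrow> 'h::comm_monoid_add \<Rightarrow> 'h"
  assumes G: "\<Gamma> = {h. reach f h h0 \<and> reach f h0 h}"
    and idem: "\<forall>h::'h. h + h = h"
    and IH: "\<forall>h h'. h \<in> \<Gamma> \<longrightarrow> h' \<in> \<Gamma> \<longrightarrow> h \<noteq> h' \<longrightarrow>
               (\<exists>ss tt. simk k (relabelF (alphaG f \<Gamma>) ss) (relabelF (alphaG f \<Gamma>) tt)
                   \<and> evalF f ss = h \<and> evalF f tt = h') \<longrightarrow> (h, h') \<in> Bset f \<Gamma> k"
    and S: "simk (Suc k) (relabelF (alphaG f \<Gamma>) s) (relabelF (alphaG f \<Gamma>) t)"
    and hs: "evalF f s \<in> \<Gamma>" and ht: "evalF f t \<in> \<Gamma>" and ne: "evalF f s \<noteq> evalF f t"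
  shows "(evalF f s, evalF f t) \<in> Bstep f \<Gamma> (Bset f \<Gamma> k)"
proof -
  define Mt where "Mt x y \<longleftrightarrow> (\<exists>a ss tt. x = Node a ss \<and> y = Node a tt
      \<and> alphaG f \<Gamma> ss = alphaG f \<Gamma> tt \<and> simk k (relabelF (alphaG f \<Gamma>) ss) (relabelF (alphaG f \<Gamma>) tt))"
    for x y
  have "\<forall>x\<in>set s. \<exists>y. y \<in> set t \<and> Mt x y" using match[OF S] unfolding Mt_def by blast
  then obtain p where p: "\<forall>x\<in>set s. p x \<in> set t \<and> Mt x (p x)" by metis
  have S': "simk (Suc k) (relabelF (alphaG f \<Gamma>) t) (relabelF (alphaG f \<Gamma>) s)"
    using simk_sym[OF S] .
  have "\<forall>y\<in>set t. \<exists>x. x \<in> set s \<and> Mt x y"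
  proof
    fix y assume "y \<in> set t"
    from match[OF S' this] obtain x a ss tt where "x \<in> set s" "y = Node a ss" "x = Node a tt"
      "alphaG f \<Gamma> ss = alphaG f \<Gamma> tt" "simk k (relabelF (alphaG f \<Gamma>) ss) (relabelF (alphaG f \<Gamma>) tt)"
      by blast
    then show "\<exists>x. x \<in> set s \<and> Mt x y" unfolding Mt_def using simk_sym by metis
  qed
  then obtain q where q: "\<forall>y\<in>set t. q y \<in> set s \<and> Mt (q y) y" by metis
  define L where "L = map (\<lambda>x. (evalT f x, evalT f (p x))) s @ map (\<lambda>y. (evalT f (q y), evalT f y)) t"
  have "set (map fst L) = set (map (evalT f) s)" unfolding L_def using q by auto
  then have e1: "sum_list (map fst L) = evalF f s" unfolding evalF_def by (rule sum_list_set[OF idem])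
  have "set (map snd L) = set (map (evalT f) t)" unfolding L_def using p by auto
  then have e2: "sum_list (map snd L) = evalF f t" unfolding evalF_def by (rule sum_list_set[OF idem])
  have gp: "evalT f x = evalT f y \<or> (evalT f x, evalT f y) \<in> Bstep f \<Gamma> (Bset f \<Gamma> k)"
    if "x \<in> set s" "y \<in> set t" "Mt x y" for x y
  proof -
    from that(3) obtain a ss tt where "x = Node a ss" "y = Node a tt"
      "alphaG f \<Gamma> ss = alphaG f \<Gamma> tt" "simk k (relabelF (alphaG f \<Gamma>) ss) (relabelF (alphaG f \<Gamma>) tt)"
      unfolding Mt_def by blast
    from good_pair[OF G hs that(1) ht that(2) this IH] show ?thesis .
  qed
  have good: "\<forall>(a,b)\<in>set L. a = b \<or> (a,b) \<in> Bstep f \<Gamma> (Bset f \<Gamma> k)"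
    unfolding L_def using gp p q by auto
  have "(sum_list (map fst L) + 0, sum_list (map snd L) + 0) \<in> B0 \<Gamma>"
    using e1 e2 hs ht ne unfolding B0_def by simp
  then have "(sum_list (map fst L) + 0, sum_list (map snd L) + 0) \<in> Bstep f \<Gamma> (Bset f \<Gamma> k)"
    using pair_list[OF G good] by blast
  then show ?thesis using e1 e2 by simp
qed

theorem theorem4:
  fixes f :: "'a::finite \<Rightarrow> 'h::{finite, comm_monoid_add} \<Rightarrow> 'h"
    and \<Gamma> :: "'h set"
  assumes onto: "\<forall>h. \<exists>s. evalF f s = h"
    and idem: "\<forall>h::'h. h + h = h"
    and gclass: "reach_class f \<Gamma>"
  shows "(\<forall>h h' k. h \<in> \<Gamma> \<longrightarrow> h' \<in> \<Gamma> \<longrightarrow> h \<noteq> h' \<longrightarrow>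
            ((h, h') \<in> Bset f \<Gamma> k \<longleftrightarrow>
             (\<exists>s t. simk k (relabelF (alphaG f \<Gamma>) s) (relabelF (alphaG f \<Gamma>) t)
                    \<and> evalF f s = h \<and> evalF f t = h')))
         \<and> (\<forall>k. Bset f \<Gamma> (Suc k) \<subseteq> Bset f \<Gamma> k)"
proof -
  obtain h0 where G: "\<Gamma> = {h. reach f h h0 \<and> reach f h0 h}"
    using gclass unfolding reach_class_def by blast
  have main: "\<forall>h h'. h \<in> \<Gamma> \<longrightarrow> h' \<in> \<Gamma> \<longrightarrow> h \<noteq> h' \<longrightarrow>
            ((h, h') \<in> Bset f \<Gamma> k \<longleftrightarrow>
             (\<exists>s t. simk k (relabelF (alphaG f \<Gamma>) s) (relabelF (alphaG f \<Gamma>) t)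
                    \<and> evalF f s = h \<and> evalF f t = h'))" for k
  proof (induction k)
    case 0
    show ?case
    proof (intro allI impI)
      fix h h' :: 'h
      assume "h \<in> \<Gamma>" "h' \<in> \<Gamma>" "h \<noteq> h'"
      moreover obtain s t where "evalF f s = h" "evalF f t = h'" using onto by metis
      ultimately show "((h, h') \<in> Bset f \<Gamma> 0 \<longleftrightarrow>
             (\<exists>s t. simk 0 (relabelF (alphaG f \<Gamma>) s) (relabelF (alphaG f \<Gamma>) t)
                    \<and> evalF f s = h \<and> evalF f t = h'))" by (auto simp: B0_def)
    qed
  next
    case (Suc k)
    have IH1: "\<forall>h h'. h \<in> \<Gamma> \<longrightarrow> h' \<in> \<Gamma> \<longrightarrow> h \<noteq> h' \<longrightarrow>
               (\<exists>ss tt. simk k (relabelF (alphaG f \<Gamma>) ss) (relabelF (alphaG f \<Gamma>) tt)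
                   \<and> evalF f ss = h \<and> evalF f tt = h') \<longrightarrow> (h, h') \<in> Bset f \<Gamma> k"
      using Suc.IH by blast
    have W: "\<forall>(a,b)\<in>Bset f \<Gamma> k. \<exists>ss tt. simk k (relabelF (alphaG f \<Gamma>) ss) (relabelF (alphaG f \<Gamma>) tt)
               \<and> evalF f ss = a \<and> evalF f tt = b"
    proof
      fix pq assume pq: "pq \<in> Bset f \<Gamma> k"
      obtain a b where ab: "pq = (a,b)" by fastforce
      have "a \<in> \<Gamma>" "b \<in> \<Gamma>" "a \<noteq> b" using Bset_B0 pq ab unfolding B0_def by auto
      then show "case pq of (a,b) \<Rightarrow> \<exists>ss tt. simk k (relabelF (alphaG f \<Gamma>) ss) (relabelF (alphaG f \<Gamma>) tt)
               \<and> evalF f ss = a \<and> evalF f tt = b" using Suc.IH pq ab by auto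
    qed
    show ?case
    proof (intro allI impI iffI)
      fix h h' assume "h \<in> \<Gamma>" "h' \<in> \<Gamma>" "h \<noteq> h'" "(h, h') \<in> Bset f \<Gamma> (Suc k)"
      then show "\<exists>s t. simk (Suc k) (relabelF (alphaG f \<Gamma>) s) (relabelF (alphaG f \<Gamma>) t)
                    \<and> evalF f s = h \<and> evalF f t = h'"
        using only_if[OF G onto Bset_B0 W] by simp
    next
      fix h h' assume hh: "h \<in> \<Gamma>" "h' \<in> \<Gamma>" "h \<noteq> h'"
        and "\<exists>s t. simk (Suc k) (relabelF (alphaG f \<Gamma>) s) (relabelF (alphaG f \<Gamma>) t)
                    \<and> evalF f s = h \<and> evalF f t = h'"
      then obtain s t where st: "simk (Suc k) (relabelF (alphaG f \<Gamma>) s) (relabelF (alphaG f \<Gamma>) t)"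
        "evalF f s = h" "evalF f t = h'" by blast
      have "(evalF f s, evalF f t) \<in> Bstep f \<Gamma> (Bset f \<Gamma> k)"
        using if_dir[OF G idem IH1 st(1)] hh st by (simp add: B0_def)
      then show "(h, h') \<in> Bset f \<Gamma> (Suc k)" using st by simp
    qed
  qed
  have sub: "Bset f \<Gamma> (Suc k) \<subseteq> Bset f \<Gamma> k" for k
  proof
    fix pq assume pq: "pq \<in> Bset f \<Gamma> (Suc k)"
    obtain a b where ab: "pq = (a,b)" by fastforce
    have abG: "a \<in> \<Gamma>" "b \<in> \<Gamma>" "a \<noteq> b" using Bset_B0 pq ab unfolding B0_def by blast+
    then obtain s t where "simk (Suc k) (relabelF (alphaG f \<Gamma>) s) (relabelF (alphaG f \<Gamma>) t)"
      "evalF f s = a" "evalF f t = b" using main[of "Suc k"] pq ab by blast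
    then have "\<exists>s t. simk k (relabelF (alphaG f \<Gamma>) s) (relabelF (alphaG f \<Gamma>) t)
                    \<and> evalF f s = a \<and> evalF f t = b" using simk_mono by blast
    then show "pq \<in> Bset f \<Gamma> k" using main[of k] abG ab by blast
  qed
  show ?thesis using main sub by blast
qed

end
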